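(* Let $A$ be a constant real $3\times3$ matrix, $\vec\mu_0\in\mathbb{R}^3$ constant, and $\vec\mu(\vec\gamma)=A\vec\gamma+\vec\mu_0$. Then $\Pi_{\vec\mu}$ defines a Poisson bracket on $\mathbb{R}^3\times(\mathbb{R}^3\setminus\{0\})$ if and only if $A$ is symmetric. In that case $C(\vec M,\vec\gamma)=\tfrac12\vec\gamma\cdot A\vec\gamma+(\vec M+\vec\mu_0)\cdot\vec\gamma$ is a Casimir function of $\Pi_{\vec\mu}$.
   Context: Coordinates on $\mathbb{R}^6$ are $(\vec M,\vec\gamma)=(M_1,M_2,M_3,\gamma_1,\gamma_2,\gamma_3)$. For a smooth $\vec\mu=(\mu_1,\mu_2,\mu_3)$ of $(\vec M,\vec\gamma)$, $\Pi_{\vec\mu}$ is the skew-symmetric $6\times6$ matrix $$\Pi_{\vec\mu}=\begin{bmatrix}0&-M_3-\mu_3&M_2+\mu_2&0&-\gamma_3&\gamma_2\\ M_3+\mu_3&0&-M_1-\mu_1&\gamma_3&0&-\gamma_1\\ -M_2-\mu_2&M_1+\mu_1&0&-\gamma_2&\gamma_1&0\\ 0&-\gamma_3&\gamma_2&0&0&0\\ \gamma_3&0&-\gamma_1&0&0&0\\ -\gamma_2&\gamma_1&0&0&0&0\end{bmatrix},$$ it "defines a Poisson bracket" if $\{f,g\}_{\vec\mu}=(\nabla f)^T\Pi_{\vec\mu}\nabla g$ satisfies the Jacobi identity, and a Casimir function is a smooth $C$ with $\Pi_{\vec\mu}\nabla C=0$. *)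

theory Defs
  imports "HOL-Analysis.Analysis"
begin

text \<open>Points of R^6 are pairs (M, gamma) with M, gamma :: real^3.
  Coordinates are indexed 0..5 in the order (M1,M2,M3,g1,g2,g3).\<close>

type_synonym pt = "(real^3) \<times> (real^3)"

definition unitv :: "nat \<Rightarrow> pt" where
  "unitv i = [(axis 1 1, 0), (axis 2 1, 0), (axis 3 1, 0),
              (0, axis 1 1), (0, axis 2 1), (0, axis 3 1)] ! i"

definition partial :: "nat \<Rightarrow> (pt \<Rightarrow> real) \<Rightarrow> pt \<Rightarrow> real" where
  "partial i f x = deriv (\<lambda>t. f (x + t *\<^sub>R unitv i)) 0"

fun Ck_on :: "nat \<Rightarrow> pt set \<Rightarrow> (pt \<Rightarrow> real) \<Rightarrow> bool" where
  "Ck_on 0 U f = continuous_on U f"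
| "Ck_on (Suc k) U f = (continuous_on U f \<and> (\<forall>x\<in>U. f differentiable (at x))
       \<and> (\<forall>i<6. Ck_on k U (partial i f)))"

definition smooth_on :: "pt set \<Rightarrow> (pt \<Rightarrow> real) \<Rightarrow> bool" where
  "smooth_on U f \<longleftrightarrow> (\<forall>k. Ck_on k U f)"

definition PiMat :: "(pt \<Rightarrow> real^3) \<Rightarrow> pt \<Rightarrow> nat \<Rightarrow> nat \<Rightarrow> real" where
  "PiMat mu p i j = (case p of (M, g) \<Rightarrow> let m = mu (M, g) in
     [[0, -(M$3) - m$3, M$2 + m$2, 0, -(g$3), g$2],
      [M$3 + m$3, 0, -(M$1) - m$1, g$3, 0, -(g$1)],
      [-(M$2) - m$2, M$1 + m$1, 0, -(g$2), g$1, 0],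
      [0, -(g$3), g$2, 0, 0, 0],
      [g$3, 0, -(g$1), 0, 0, 0],
      [-(g$2), g$1, 0, 0, 0, 0]] ! i ! j)"

definition pbracket :: "(pt \<Rightarrow> real^3) \<Rightarrow> (pt \<Rightarrow> real) \<Rightarrow> (pt \<Rightarrow> real) \<Rightarrow> pt \<Rightarrow> real" where
  "pbracket mu f g x = (\<Sum>i<6. \<Sum>j<6. partial i f x * PiMat mu x i j * partial j g x)"

text \<open>Pi_mu defines a Poisson bracket on U: the bracket satisfies the Jacobi identity
  for all smooth functions on U (skew-symmetry and Leibniz are automatic).\<close>
definition defines_poisson_on :: "pt set \<Rightarrow> (pt \<Rightarrow> real^3) \<Rightarrow> bool" where
  "defines_poisson_on U mu \<longleftrightarrow>
     (\<forall>f g h. smooth_on U f \<and> smooth_on U g \<and> smooth_on U h \<longrightarrow>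
        (\<forall>x\<in>U. pbracket mu f (pbracket mu g h) x + pbracket mu g (pbracket mu h f) x
               + pbracket mu h (pbracket mu f g) x = 0))"

definition casimir_on :: "pt set \<Rightarrow> (pt \<Rightarrow> real^3) \<Rightarrow> (pt \<Rightarrow> real) \<Rightarrow> bool" where
  "casimir_on U mu C \<longleftrightarrow> smooth_on U C \<and>
     (\<forall>x\<in>U. \<forall>i<6. (\<Sum>j<6. PiMat mu x i j * partial j C x) = 0)"

definition domU :: "pt set" where
  "domU = {p. snd p \<noteq> 0}"

end

theory Submission
  imports Defs
begin


lemma less6: "(i::nat) < 6 \<longleftrightarrow> i = 0 \<or> i = 1 \<or> i = 2 \<or> i = 3 \<or> i = 4 \<or> i = 5" by auto

lemma mvt_deriv:
  fixes f f' :: "real \<Rightarrow> real"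
  assumes "a < b" "\<And>s. a \<le> s \<Longrightarrow> s \<le> b \<Longrightarrow> DERIV f s :> f' s"
  shows "\<exists>z. a < z \<and> z < b \<and> f b - f a = (b - a) * f' z"
proof -
  have "continuous_on {a..b} f"
  proof (rule continuous_at_imp_continuous_on, rule ballI)
    fix x assume "x \<in> {a..b}"
    then have "DERIV f x :> f' x" using assms(2) by simp
    thus "isCont f x" by (rule DERIV_isCont)
  qed
  moreover have "\<And>x. a < x \<Longrightarrow> x < b \<Longrightarrow> f differentiable (at x)"
  proof -
    fix x assume "a < x" "x < b"
    then have "DERIV f x :> f' x" using assms(2) by simp
    thus "f differentiable (at x)" unfolding real_differentiable_def by (rule exI)
  qed
  ultimately obtain l z where "a < z" "z < b" "DERIV f z :> l" "f b - f a = (b - a) * l"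
    using MVT[OF assms(1)] by blast
  moreover have "l = f' z"
  proof (rule DERIV_unique)
    show "DERIV f z :> l" by fact
    show "DERIV f z :> f' z" using assms(2) \<open>a < z\<close> \<open>z < b\<close> by simp
  qed
  ultimately show ?thesis by blast
qed

lemma line_deriv:
  assumes "f differentiable (at (y + s0 *\<^sub>R v))"
  shows "((\<lambda>s. f (y + s *\<^sub>R v)) has_real_derivative frechet_derivative f (at (y + s0 *\<^sub>R v)) v) (at s0)"
proof -
  let ?z = "y + s0 *\<^sub>R v"
  let ?F = "frechet_derivative f (at ?z)"
  have F: "(f has_derivative ?F) (at ?z)" using assms frechet_derivative_works by blast
  have L: "((\<lambda>s. y + s *\<^sub>R v) has_derivative (\<lambda>s. s *\<^sub>R v)) (at s0)"
    by (auto intro!: derivative_eq_intros)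
  have "((\<lambda>s. f (y + s *\<^sub>R v)) has_derivative (\<lambda>s. ?F (s *\<^sub>R v))) (at s0)"
    using has_derivative_compose[OF L F] by (simp add: o_def)
  moreover have lin: "linear ?F" using F has_derivative_linear by blast
  have "(\<lambda>s. ?F (s *\<^sub>R v)) = (\<lambda>s. ?F v * s)"
    using linear_scale[OF lin] by (auto simp: mult.commute)
  ultimately show ?thesis by (simp add: has_field_derivative_def)
qed

lemma partial_frechet:
  assumes "f differentiable (at z)"
  shows "partial i f z = frechet_derivative f (at z) (unitv i)"
proof -
  have "((\<lambda>s. f (z + s *\<^sub>R unitv i)) has_real_derivative frechet_derivative f (at z) (unitv i)) (at 0)"
    using line_deriv[of f z 0 "unitv i"] assms by simp
  thus ?thesis unfolding partial_def by (rule DERIV_imp_deriv)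
qed

lemma line_partial:
  assumes "f differentiable (at (y + s0 *\<^sub>R unitv i))"
  shows "((\<lambda>s. f (y + s *\<^sub>R unitv i)) has_real_derivative partial i f (y + s0 *\<^sub>R unitv i)) (at s0)"
  using line_deriv[OF assms] partial_frechet[OF assms] by simp



lemma PiMat_skew:
  assumes "i < 6" "j < 6"
  shows "PiMat mu x i j = - PiMat mu x j i"
proof -
  obtain M g where x: "x = (M, g)" by (cases x)
  show ?thesis using assms unfolding less6
    apply (elim disjE) 
    apply (simp_all add: PiMat_def x Let_def)
    done
qed



definition Dm :: "(pt \<Rightarrow> real^3) \<Rightarrow> nat \<Rightarrow> nat \<Rightarrow> nat \<Rightarrow> real" where
  "Dm mu l i j = PiMat mu (unitv l) i j - PiMat mu 0 i j"

lemma PiMat_affine: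
  assumes mu: "mu = (\<lambda>(M::real^3, g::real^3). A *v g + mu0)" and "i < 6" "j < 6"
  shows "PiMat mu (x + t *\<^sub>R v) i j = PiMat mu x i j + t * (PiMat mu v i j - PiMat mu 0 i j)"
proof -
  obtain M g where x: "x = (M, g)" by (cases x)
  obtain M' g' where v: "v = (M', g')" by (cases v)
  have Av: "A *v (g + t *\<^sub>R g') = A *v g + t *\<^sub>R (A *v g')"
    by (simp add: matrix_vector_right_distrib matrix_vector_mult_scaleR)
  have e: "x + t *\<^sub>R v = (M + t *\<^sub>R M', g + t *\<^sub>R g')" by (simp add: x v)
  show ?thesis using assms(2,3) unfolding less6 e
    apply (elim disjE) 
    apply (simp_all add: PiMat_def mu x v Av Let_def algebra_simps zero_prod_def)
    done
qed



lemma partial_pbracket: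
  assumes mu: "mu = (\<lambda>(M::real^3, g::real^3). A *v g + mu0)"
    and g: "\<forall>i<6. partial i g differentiable (at x)"
    and h: "\<forall>j<6. partial j h differentiable (at x)"
  shows "partial l (pbracket mu g h) x = (\<Sum>i<6. \<Sum>j<6.
      partial l (partial i g) x * PiMat mu x i j * partial j h x
    + partial i g x * Dm mu l i j * partial j h x
    + partial i g x * PiMat mu x i j * partial l (partial j h) x)"
proof -
  have dg: "((\<lambda>t. partial i g (x + t *\<^sub>R unitv l)) has_real_derivative partial l (partial i g) x) (at 0)"
    if "i < 6" for i
    using line_partial[of "partial i g" x 0 l] g that by simp
  have dh: "((\<lambda>t. partial i h (x + t *\<^sub>R unitv l)) has_real_derivative partial l (partial i h) x) (at 0)"
    if "i < 6" for i
    using line_partial[of "partial i h" x 0 l] h that by simp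
  have dP: "((\<lambda>t. PiMat mu (x + t *\<^sub>R unitv l) i j) has_real_derivative Dm mu l i j) (at 0)"
    if "i < 6" "j < 6" for i j
  proof -
    have "(\<lambda>t. PiMat mu (x + t *\<^sub>R unitv l) i j) = (\<lambda>t. PiMat mu x i j + t * Dm mu l i j)"
      by (rule ext) (simp add: PiMat_affine[OF mu that] Dm_def)
    then show ?thesis by (auto intro!: derivative_eq_intros)
  qed
  have "((\<lambda>t. pbracket mu g h (x + t *\<^sub>R unitv l)) has_real_derivative (\<Sum>i<6. \<Sum>j<6.
      partial l (partial i g) x * PiMat mu x i j * partial j h x
    + partial i g x * Dm mu l i j * partial j h x
    + partial i g x * PiMat mu x i j * partial l (partial j h) x)) (at 0)"
    unfolding pbracket_def
  proof (rule DERIV_sum, rule DERIV_sum)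
    fix i j assume "i \<in> {..<6::nat}" "j \<in> {..<6::nat}"
    then have ij: "i < 6" "j < 6" by auto
    show "((\<lambda>t. partial i g (x + t *\<^sub>R unitv l) * PiMat mu (x + t *\<^sub>R unitv l) i j * partial j h (x + t *\<^sub>R unitv l)) has_real_derivative
      partial l (partial i g) x * PiMat mu x i j * partial j h x
    + partial i g x * Dm mu l i j * partial j h x
    + partial i g x * PiMat mu x i j * partial l (partial j h) x) (at 0)"
      by (rule DERIV_cong[OF DERIV_mult[OF DERIV_mult[OF dg[OF ij(1)] dP[OF ij]] dh[OF ij(2)]]])
        (simp add: algebra_simps)
  qed
  then show ?thesis unfolding partial_def by (rule DERIV_imp_deriv)
qed



lemma mixed_mvt:
  assumes r: "r > 0"
    and sq: "\<And>s t. 0 \<le> s \<Longrightarrow> s \<le> r \<Longrightarrow> 0 \<le> t \<Longrightarrow> t \<le> r \<Longrightarrow> x + s *\<^sub>R unitv i + t *\<^sub>R unitv j \<in> U"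
    and df: "\<forall>y\<in>U. f differentiable (at y)"
    and dp: "\<forall>y\<in>U. partial i f differentiable (at y)"
  shows "\<exists>\<xi> \<eta>. 0 < \<xi> \<and> \<xi> < r \<and> 0 < \<eta> \<and> \<eta> < r \<and>
     f (x + r *\<^sub>R unitv i + r *\<^sub>R unitv j) - f (x + r *\<^sub>R unitv i) - f (x + r *\<^sub>R unitv j) + f x
     = r * r * partial j (partial i f) (x + \<xi> *\<^sub>R unitv i + \<eta> *\<^sub>R unitv j)"
proof -
  let ?a = "unitv i" and ?b = "unitv j"
  define g where "g s = f (x + s *\<^sub>R ?a + r *\<^sub>R ?b) - f (x + s *\<^sub>R ?a)" for s
  have "DERIV g s :> partial i f (x + s *\<^sub>R ?a + r *\<^sub>R ?b) - partial i f (x + s *\<^sub>R ?a)"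
    if "0 \<le> s" "s \<le> r" for s
  proof -
    have in1: "x + s *\<^sub>R ?a + r *\<^sub>R ?b \<in> U" using sq[of s r] that r by simp
    have in2: "x + s *\<^sub>R ?a \<in> U" using sq[of s 0] that r by simp
    have e1: "(\<lambda>s. f (x + s *\<^sub>R ?a + r *\<^sub>R ?b)) = (\<lambda>s. f ((x + r *\<^sub>R ?b) + s *\<^sub>R ?a))"
      by (simp add: add_ac)
    have p1: "x + s *\<^sub>R ?a + r *\<^sub>R ?b = (x + r *\<^sub>R ?b) + s *\<^sub>R ?a" by (simp add: add_ac)
    have D1: "DERIV (\<lambda>s. f (x + s *\<^sub>R ?a + r *\<^sub>R ?b)) s :> partial i f (x + s *\<^sub>R ?a + r *\<^sub>R ?b)"
      unfolding e1 p1 by (rule line_partial) (use df in1 in \<open>simp only: p1\<close>)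
    have D2: "DERIV (\<lambda>s. f (x + s *\<^sub>R ?a)) s :> partial i f (x + s *\<^sub>R ?a)"
      by (rule line_partial) (use df in2 in blast)
    show ?thesis unfolding g_def by (rule DERIV_diff[OF D1 D2])
  qed
  then obtain \<xi> where xi: "0 < \<xi>" "\<xi> < r"
    and gx: "g r - g 0 = (r - 0) * (partial i f (x + \<xi> *\<^sub>R ?a + r *\<^sub>R ?b) - partial i f (x + \<xi> *\<^sub>R ?a))"
    using mvt_deriv[OF r, of g "\<lambda>s. partial i f (x + s *\<^sub>R ?a + r *\<^sub>R ?b) - partial i f (x + s *\<^sub>R ?a)"] by blast
  define h where "h t = partial i f (x + \<xi> *\<^sub>R ?a + t *\<^sub>R ?b)" for t
  have "DERIV h t :> partial j (partial i f) (x + \<xi> *\<^sub>R ?a + t *\<^sub>R ?b)"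
    if "0 \<le> t" "t \<le> r" for t
  proof -
    have in1: "x + \<xi> *\<^sub>R ?a + t *\<^sub>R ?b \<in> U" using sq[of \<xi> t] that xi by simp
    show ?thesis unfolding h_def by (rule line_partial) (use dp in1 in blast)
  qed
  then obtain \<eta> where eta: "0 < \<eta>" "\<eta> < r"
    and hx: "h r - h 0 = (r - 0) * partial j (partial i f) (x + \<xi> *\<^sub>R ?a + \<eta> *\<^sub>R ?b)"
    using mvt_deriv[OF r, of h "\<lambda>t. partial j (partial i f) (x + \<xi> *\<^sub>R ?a + t *\<^sub>R ?b)"] by blast
  have "f (x + r *\<^sub>R ?a + r *\<^sub>R ?b) - f (x + r *\<^sub>R ?a) - f (x + r *\<^sub>R ?b) + f x = g r - g 0"
    by (simp add: g_def)
  also have "\<dots> = r * (h r - h 0)" using gx by (simp add: h_def)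
  also have "\<dots> = r * r * partial j (partial i f) (x + \<xi> *\<^sub>R ?a + \<eta> *\<^sub>R ?b)" using hx by simp
  finally show ?thesis using xi eta by blast
qed



lemma small_step:
  fixes a b :: pt
  assumes "0 \<le> s" "s \<le> r" "0 \<le> t" "t \<le> r" "0 < \<delta>" "r = \<delta> / (2 * (norm a + norm b + 1))"
  shows "dist (x + s *\<^sub>R a + t *\<^sub>R b) x < \<delta>"
proof -
  have K: "norm a + norm b + 1 > 0" by (simp add: add_nonneg_pos)
  have "dist (x + s *\<^sub>R a + t *\<^sub>R b) x = norm (s *\<^sub>R a + t *\<^sub>R b)" by (simp add: dist_norm)
  also have "\<dots> \<le> norm (s *\<^sub>R a) + norm (t *\<^sub>R b)" by (rule norm_triangle_ineq)
  also have "\<dots> = s * norm a + t * norm b" using assms by simp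
  also have "\<dots> \<le> r * norm a + r * norm b"
    using assms by (intro add_mono mult_right_mono) auto
  also have "\<dots> < \<delta>"
  proof -
    have rp: "r > 0" using assms K by simp
    have eq: "r * (norm a + norm b + 1) * 2 = \<delta>" using K assms by (simp add: field_simps)
    have "r * norm a \<ge> 0" "r * norm b \<ge> 0" using rp by auto
    moreover have "r * 2 + (r * (norm a * 2) + r * (norm b * 2)) = \<delta>" using eq by (simp add: algebra_simps)
    ultimately show ?thesis using rp by linarith
  qed
  finally show ?thesis .
qed

lemma abs_helper:
  fixes u v q q' :: real
  assumes "\<bar>u - q\<bar> < \<bar>q - q'\<bar> / 2" "\<bar>v - q'\<bar> < \<bar>q - q'\<bar> / 2" "u = v"
  shows False
  using assms by (auto simp: abs_less_iff abs_if split: if_splits)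

lemma schwarz:
  assumes U: "open U" "x \<in> U"
    and df: "\<forall>y\<in>U. f differentiable (at y)"
    and dpi: "\<forall>y\<in>U. partial i f differentiable (at y)"
    and dpj: "\<forall>y\<in>U. partial j f differentiable (at y)"
    and ci: "continuous_on U (partial j (partial i f))"
    and cj: "continuous_on U (partial i (partial j f))"
  shows "partial j (partial i f) x = partial i (partial j f) x"
proof (rule ccontr)
  let ?q = "partial j (partial i f)" and ?q' = "partial i (partial j f)"
  let ?a = "unitv i" and ?b = "unitv j"
  assume ne: "?q x \<noteq> ?q' x"
  define d where "d = \<bar>?q x - ?q' x\<bar>"
  have d: "d > 0" using ne by (simp add: d_def)
  obtain \<delta>0 where d0: "\<delta>0 > 0" "ball x \<delta>0 \<subseteq> U" using U open_contains_ball by blast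
  have "isCont ?q x" using ci U continuous_on_eq_continuous_at by blast
  then obtain \<delta>1 where d1: "\<delta>1 > 0" "\<And>y. dist y x < \<delta>1 \<Longrightarrow> dist (?q y) (?q x) < d/2"
    unfolding continuous_at_eps_delta using d by (meson half_gt_zero)
  have "isCont ?q' x" using cj U continuous_on_eq_continuous_at by blast
  then obtain \<delta>2 where d2: "\<delta>2 > 0" "\<And>y. dist y x < \<delta>2 \<Longrightarrow> dist (?q' y) (?q' x) < d/2"
    unfolding continuous_at_eps_delta using d by (meson half_gt_zero)
  define \<delta> where "\<delta> = min \<delta>0 (min \<delta>1 \<delta>2)"
  have dpos: "\<delta> > 0" using d0 d1 d2 by (simp add: \<delta>_def)
  define r where "r = \<delta> / (2 * (norm ?a + norm ?b + 1))"
  define r' where "r' = \<delta> / (2 * (norm ?b + norm ?a + 1))"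
  have rr: "r' = r" by (simp add: r_def r'_def add_ac)
  have rpos: "r > 0" using dpos by (simp add: r_def add_nonneg_pos)
  have sq: "x + s *\<^sub>R ?a + t *\<^sub>R ?b \<in> U" if "0 \<le> s" "s \<le> r" "0 \<le> t" "t \<le> r" for s t
  proof -
    have "dist (x + s *\<^sub>R ?a + t *\<^sub>R ?b) x < \<delta>" by (rule small_step) (use that dpos r_def in auto)
    then have "x + s *\<^sub>R ?a + t *\<^sub>R ?b \<in> ball x \<delta>0" by (simp add: \<delta>_def dist_commute)
    then show ?thesis using d0 by blast
  qed
  have sq': "x + s *\<^sub>R ?b + t *\<^sub>R ?a \<in> U" if "0 \<le> s" "s \<le> r" "0 \<le> t" "t \<le> r" for s t
    using sq[of t s] that by (simp add: add_ac)
  obtain \<xi> \<eta> where p1: "0 < \<xi>" "\<xi> < r" "0 < \<eta>" "\<eta> < r"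
    and e1: "f (x + r *\<^sub>R ?a + r *\<^sub>R ?b) - f (x + r *\<^sub>R ?a) - f (x + r *\<^sub>R ?b) + f x
     = r * r * ?q (x + \<xi> *\<^sub>R ?a + \<eta> *\<^sub>R ?b)"
    using mixed_mvt[of r x i j U f, OF rpos sq df dpi] by blast
  obtain \<xi>' \<eta>' where p2: "0 < \<xi>'" "\<xi>' < r" "0 < \<eta>'" "\<eta>' < r"
    and e2: "f (x + r *\<^sub>R ?b + r *\<^sub>R ?a) - f (x + r *\<^sub>R ?b) - f (x + r *\<^sub>R ?a) + f x
     = r * r * ?q' (x + \<xi>' *\<^sub>R ?b + \<eta>' *\<^sub>R ?a)"
    using mixed_mvt[of r x j i U f, OF rpos sq' df dpj] by blast
  have "f (x + r *\<^sub>R ?b + r *\<^sub>R ?a) = f (x + r *\<^sub>R ?a + r *\<^sub>R ?b)" by (simp add: add_ac)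
  then have "r * r * ?q (x + \<xi> *\<^sub>R ?a + \<eta> *\<^sub>R ?b) = r * r * ?q' (x + \<xi>' *\<^sub>R ?b + \<eta>' *\<^sub>R ?a)"
    using e1 e2 by linarith
  then have qq: "?q (x + \<xi> *\<^sub>R ?a + \<eta> *\<^sub>R ?b) = ?q' (x + \<xi>' *\<^sub>R ?b + \<eta>' *\<^sub>R ?a)"
    using rpos by simp
  have "dist (x + \<xi> *\<^sub>R ?a + \<eta> *\<^sub>R ?b) x < \<delta>"
    by (rule small_step) (use p1 dpos r_def in auto)
  then have A1: "dist (?q (x + \<xi> *\<^sub>R ?a + \<eta> *\<^sub>R ?b)) (?q x) < d/2"
    using d1 by (simp add: \<delta>_def)
  have "dist (x + \<xi>' *\<^sub>R ?b + \<eta>' *\<^sub>R ?a) x < \<delta>"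
    by (rule small_step) (use p2 dpos r'_def rr in auto)
  then have A2: "dist (?q' (x + \<xi>' *\<^sub>R ?b + \<eta>' *\<^sub>R ?a)) (?q' x) < d/2"
    using d2 by (simp add: \<delta>_def)
  show False using abs_helper[OF A1[unfolded d_def dist_real_def] A2[unfolded d_def dist_real_def] qq] .
qed



lemma sum4_prod:
  "(\<Sum>a\<in>S. \<Sum>b\<in>S. \<Sum>c\<in>S. \<Sum>d\<in>S. X a b c d) = (\<Sum>(a,b,c,d)\<in>S\<times>S\<times>S\<times>S. X a b c d)"
  by (simp add: sum.cartesian_product split_def)

lemma perm_P1:
  "(\<Sum>a\<in>S. \<Sum>b\<in>S. \<Sum>c\<in>S. \<Sum>d\<in>S. X a b c d) = (\<Sum>a\<in>S. \<Sum>b\<in>S. \<Sum>c\<in>S. \<Sum>d\<in>S. X d c a b)"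
  unfolding sum4_prod
  by (rule sum.reindex_bij_witness[of _ "\<lambda>(a,b,c,d). (d,c,a,b)" "\<lambda>(a,b,c,d). (c,d,b,a)"]) auto

lemma perm_P2:
  "(\<Sum>a\<in>S. \<Sum>b\<in>S. \<Sum>c\<in>S. \<Sum>d\<in>S. X a b c d) = (\<Sum>a\<in>S. \<Sum>c\<in>S. \<Sum>d\<in>S. \<Sum>b\<in>S. X a b c d)"
  unfolding sum4_prod
  by (rule sum.reindex_bij_witness[of _ "\<lambda>(a,c,d,b). (a,b,c,d)" "\<lambda>(a,b,c,d). (a,c,d,b)"]) auto

lemma perm_P3:
  "(\<Sum>a\<in>S. \<Sum>b\<in>S. \<Sum>c\<in>S. \<Sum>d\<in>S. X a b c d) = (\<Sum>A\<in>S. \<Sum>I\<in>S. \<Sum>J\<in>S. \<Sum>L\<in>S. X I L J A)"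
  unfolding sum4_prod
  by (rule sum.reindex_bij_witness[of _ "\<lambda>(A,I,J,L). (I,L,J,A)" "\<lambda>(a,l,i,j). (j,a,i,l)"]) auto

lemma perm_P4:
  "(\<Sum>a\<in>S. \<Sum>b\<in>S. \<Sum>c\<in>S. \<Sum>d\<in>S. X a b c d) = (\<Sum>A\<in>S. \<Sum>I\<in>S. \<Sum>J\<in>S. \<Sum>L\<in>S. X J L A I)"
  unfolding sum4_prod
  by (rule sum.reindex_bij_witness[of _ "\<lambda>(a,l,i,j). (i,j,a,l)" "\<lambda>(A,I,J,L). (J,L,A,I)"]) auto



lemma cancel_pair:
  fixes P Q :: "nat \<Rightarrow> nat \<Rightarrow> real" and U V :: "nat \<Rightarrow> real"
  assumes skew: "\<forall>a\<in>S. \<forall>b\<in>S. P a b = - P b a" and sym: "\<forall>a\<in>S. \<forall>b\<in>S. Q a b = Q b a"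
  shows "(\<Sum>a\<in>S. \<Sum>l\<in>S. \<Sum>i\<in>S. \<Sum>j\<in>S. U a * P a l * (Q i l * P i j * V j))
       + (\<Sum>a\<in>S. \<Sum>l\<in>S. \<Sum>i\<in>S. \<Sum>j\<in>S. V a * P a l * (U i * P i j * Q j l)) = 0"
proof -
  have "(\<Sum>a\<in>S. \<Sum>l\<in>S. \<Sum>i\<in>S. \<Sum>j\<in>S. V a * P a l * (U i * P i j * Q j l))
      = (\<Sum>a\<in>S. \<Sum>l\<in>S. \<Sum>i\<in>S. \<Sum>j\<in>S. V j * P j i * (U a * P a l * Q l i))"
    by (rule perm_P1)
  also have "\<dots> = (\<Sum>a\<in>S. \<Sum>l\<in>S. \<Sum>i\<in>S. \<Sum>j\<in>S. - (U a * P a l * (Q i l * P i j * V j)))"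
  proof (intro sum.cong refl)
    fix a l i j assume "a \<in> S" "l \<in> S" "i \<in> S" "j \<in> S"
    then have "P j i = - P i j" "Q l i = Q i l" using skew sym by blast+
    then show "V j * P j i * (U a * P a l * Q l i) = - (U a * P a l * (Q i l * P i j * V j))"
      by (simp add: algebra_simps)
  qed
  also have "\<dots> = - (\<Sum>a\<in>S. \<Sum>l\<in>S. \<Sum>i\<in>S. \<Sum>j\<in>S. U a * P a l * (Q i l * P i j * V j))"
    by (simp add: sum_negf)
  finally show ?thesis by simp
qed

lemma dist3:
  fixes c :: "nat \<Rightarrow> nat \<Rightarrow> real"
  shows "(\<Sum>a\<in>S. \<Sum>l\<in>S. c a l * (\<Sum>i\<in>S. \<Sum>j\<in>S. x l i j + y l i j + z l i j))
   = (\<Sum>a\<in>S. \<Sum>l\<in>S. \<Sum>i\<in>S. \<Sum>j\<in>S. c a l * x l i j)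
   + (\<Sum>a\<in>S. \<Sum>l\<in>S. \<Sum>i\<in>S. \<Sum>j\<in>S. c a l * y l i j)
   + (\<Sum>a\<in>S. \<Sum>l\<in>S. \<Sum>i\<in>S. \<Sum>j\<in>S. c a l * z l i j)"
  by (simp add: sum_distrib_left sum.distrib distrib_left)

definition Bk :: "nat set \<Rightarrow> (nat \<Rightarrow> nat \<Rightarrow> real) \<Rightarrow> (nat \<Rightarrow> nat \<Rightarrow> nat \<Rightarrow> real) \<Rightarrow> (nat \<Rightarrow> real) \<Rightarrow> (nat \<Rightarrow> nat \<Rightarrow> real)
   \<Rightarrow> (nat \<Rightarrow> real) \<Rightarrow> (nat \<Rightarrow> nat \<Rightarrow> real) \<Rightarrow> nat \<Rightarrow> real" where
  "Bk S P D X X2 Y Y2 l = (\<Sum>i\<in>S. \<Sum>j\<in>S. X2 i l * P i j * Y j + X i * D l i j * Y j + X i * P i j * Y2 j l)"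

lemma jac_alg:
  fixes P :: "nat \<Rightarrow> nat \<Rightarrow> real" and D :: "nat \<Rightarrow> nat \<Rightarrow> nat \<Rightarrow> real"
  assumes skew: "\<forall>a\<in>S. \<forall>b\<in>S. P a b = - P b a"
    and sF: "\<forall>a\<in>S. \<forall>b\<in>S. F2 a b = F2 b a"
    and sG: "\<forall>a\<in>S. \<forall>b\<in>S. G2 a b = G2 b a"
    and sH: "\<forall>a\<in>S. \<forall>b\<in>S. H2 a b = H2 b a"
  shows "(\<Sum>a\<in>S. \<Sum>l\<in>S. F a * P a l * Bk S P D G G2 H H2 l)
       + (\<Sum>a\<in>S. \<Sum>l\<in>S. G a * P a l * Bk S P D H H2 F F2 l)
       + (\<Sum>a\<in>S. \<Sum>l\<in>S. H a * P a l * Bk S P D F F2 G G2 l)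
     = (\<Sum>a\<in>S. \<Sum>i\<in>S. \<Sum>j\<in>S. F a * G i * H j * (\<Sum>l\<in>S. P a l * D l i j + P i l * D l j a + P j l * D l a i))"
proof -
  let ?s = "\<lambda>X. (\<Sum>a\<in>S. \<Sum>l\<in>S. \<Sum>i\<in>S. \<Sum>j\<in>S. X a l i j)"
  have e1: "(\<Sum>a\<in>S. \<Sum>l\<in>S. F a * P a l * Bk S P D G G2 H H2 l)
     = ?s (\<lambda>a l i j. F a * P a l * (G2 i l * P i j * H j)) + ?s (\<lambda>a l i j. F a * P a l * (G i * D l i j * H j))
       + ?s (\<lambda>a l i j. F a * P a l * (G i * P i j * H2 j l))"
    unfolding Bk_def by (rule dist3)
  have e2: "(\<Sum>a\<in>S. \<Sum>l\<in>S. G a * P a l * Bk S P D H H2 F F2 l)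
     = ?s (\<lambda>a l i j. G a * P a l * (H2 i l * P i j * F j)) + ?s (\<lambda>a l i j. G a * P a l * (H i * D l i j * F j))
       + ?s (\<lambda>a l i j. G a * P a l * (H i * P i j * F2 j l))"
    unfolding Bk_def by (rule dist3)
  have e3: "(\<Sum>a\<in>S. \<Sum>l\<in>S. H a * P a l * Bk S P D F F2 G G2 l)
     = ?s (\<lambda>a l i j. H a * P a l * (F2 i l * P i j * G j)) + ?s (\<lambda>a l i j. H a * P a l * (F i * D l i j * G j))
       + ?s (\<lambda>a l i j. H a * P a l * (F i * P i j * G2 j l))"
    unfolding Bk_def by (rule dist3)
  have c1: "?s (\<lambda>a l i j. F a * P a l * (G2 i l * P i j * H j)) + ?s (\<lambda>a l i j. H a * P a l * (F i * P i j * G2 j l)) = 0"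
    by (rule cancel_pair[OF skew sG])
  have c2: "?s (\<lambda>a l i j. G a * P a l * (H2 i l * P i j * F j)) + ?s (\<lambda>a l i j. F a * P a l * (G i * P i j * H2 j l)) = 0"
    by (rule cancel_pair[OF skew sH])
  have c3: "?s (\<lambda>a l i j. H a * P a l * (F2 i l * P i j * G j)) + ?s (\<lambda>a l i j. G a * P a l * (H i * P i j * F2 j l)) = 0"
    by (rule cancel_pair[OF skew sF])
  have d1: "?s (\<lambda>a l i j. F a * P a l * (G i * D l i j * H j))
     = (\<Sum>a\<in>S. \<Sum>i\<in>S. \<Sum>j\<in>S. \<Sum>l\<in>S. F a * G i * H j * (P a l * D l i j))"
    by (subst perm_P2) (simp add: mult_ac)
  have d2: "?s (\<lambda>a l i j. G a * P a l * (H i * D l i j * F j))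
     = (\<Sum>a\<in>S. \<Sum>i\<in>S. \<Sum>j\<in>S. \<Sum>l\<in>S. F a * G i * H j * (P i l * D l j a))"
    by (subst perm_P3) (simp add: mult_ac)
  have d3: "?s (\<lambda>a l i j. H a * P a l * (F i * D l i j * G j))
     = (\<Sum>a\<in>S. \<Sum>i\<in>S. \<Sum>j\<in>S. \<Sum>l\<in>S. F a * G i * H j * (P j l * D l a i))"
    by (subst perm_P4) (simp add: mult_ac)
  have r: "(\<Sum>a\<in>S. \<Sum>i\<in>S. \<Sum>j\<in>S. F a * G i * H j * (\<Sum>l\<in>S. P a l * D l i j + P i l * D l j a + P j l * D l a i))
     = (\<Sum>a\<in>S. \<Sum>i\<in>S. \<Sum>j\<in>S. \<Sum>l\<in>S. F a * G i * H j * (P a l * D l i j))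
     + (\<Sum>a\<in>S. \<Sum>i\<in>S. \<Sum>j\<in>S. \<Sum>l\<in>S. F a * G i * H j * (P i l * D l j a))
     + (\<Sum>a\<in>S. \<Sum>i\<in>S. \<Sum>j\<in>S. \<Sum>l\<in>S. F a * G i * H j * (P j l * D l a i))"
    by (simp add: sum_distrib_left sum.distrib distrib_left)
  show ?thesis unfolding e1 e2 e3 r d1[symmetric] d2[symmetric] d3[symmetric]
    using c1 c2 c3 by linarith
qed



lemma Ck_suc_mono: "Ck_on (Suc k) U f \<Longrightarrow> Ck_on k U f"
proof (induction k arbitrary: f)
  case 0 then show ?case by simp
next
  case (Suc k) then show ?case by (metis Ck_on.simps(2))
qed

lemma smooth_partial: "smooth_on U f \<Longrightarrow> i < 6 \<Longrightarrow> smooth_on U (partial i f)"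
  unfolding smooth_on_def by (metis Ck_on.simps(2))

lemma smooth_diff: "smooth_on U f \<Longrightarrow> x \<in> U \<Longrightarrow> f differentiable (at x)"
  unfolding smooth_on_def by (metis Ck_on.simps(2))

lemma smooth_cont: "smooth_on U f \<Longrightarrow> continuous_on U f"
  unfolding smooth_on_def by (metis Ck_on.simps(1))

definition fam :: "real \<Rightarrow> real^3 \<Rightarrow> real^3 \<Rightarrow> real^3^3 \<Rightarrow> real^3^3 \<Rightarrow> pt \<Rightarrow> real" where
  "fam c u v B1 B2 = (\<lambda>p. c + fst p \<bullet> u + snd p \<bullet> v + fst p \<bullet> (B1 *v snd p) + snd p \<bullet> (B2 *v snd p))"

definition famD :: "real^3 \<Rightarrow> real^3 \<Rightarrow> real^3^3 \<Rightarrow> real^3^3 \<Rightarrow> pt \<Rightarrow> pt \<Rightarrow> real" where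
  "famD u v B1 B2 x h = fst h \<bullet> u + snd h \<bullet> v + (fst h \<bullet> (B1 *v snd x) + fst x \<bullet> (B1 *v snd h))
     + (snd h \<bullet> (B2 *v snd x) + snd x \<bullet> (B2 *v snd h))"

lemma mv_deriv: "((\<lambda>x::pt. B *v snd x) has_derivative (\<lambda>h. B *v snd h)) (at x)"
proof -
  have "bounded_linear (\<lambda>h::pt. B *v snd h)"
    using bounded_linear_compose[OF matrix_vector_mul_bounded_linear[of B] bounded_linear_snd] by (simp add: o_def)
  then show ?thesis by (rule bounded_linear_imp_has_derivative)
qed

lemma fam_deriv: "(fam c u v B1 B2 has_derivative famD u v B1 B2 x) (at x)"
  unfolding fam_def famD_def
  by (auto intro!: derivative_eq_intros mv_deriv simp: algebra_simps)

lemma partial_fam: "partial i (fam c u v B1 B2) x = famD u v B1 B2 x (unitv i)"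
proof -
  have d: "fam c u v B1 B2 differentiable (at x)"
    unfolding differentiable_def by (rule exI, rule fam_deriv)
  have "famD u v B1 B2 x = frechet_derivative (fam c u v B1 B2) (at x)"
    by (rule frechet_derivative_at[OF fam_deriv])
  then show ?thesis using partial_frechet[OF d] by simp
qed

lemma dotT: "(a::real^3) \<bullet> (B *v b) = b \<bullet> (transpose B *v a)"
proof -
  have "b \<bullet> (transpose B *v a) = (a v* B) \<bullet> b" by (simp add: inner_commute)
  also have "\<dots> = a \<bullet> (B *v b)" by (rule dot_lmul_matrix)
  finally show ?thesis by simp
qed

lemma famD_fam: "(\<lambda>x. famD u v B1 B2 x e) = fam (fst e \<bullet> u + snd e \<bullet> v) (B1 *v snd e)
   (transpose B1 *v fst e + transpose B2 *v snd e + B2 *v snd e) 0 0"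
  unfolding fam_def famD_def
  by (rule ext) (simp add: dotT[of "fst e" B1] dotT[of "snd e" B2] inner_add_right inner_commute)

lemma partial_fam': "partial i (fam c u v B1 B2) = fam (fst (unitv i) \<bullet> u + snd (unitv i) \<bullet> v) (B1 *v snd (unitv i))
   (transpose B1 *v fst (unitv i) + transpose B2 *v snd (unitv i) + B2 *v snd (unitv i)) 0 0"
  by (rule ext) (simp only: partial_fam famD_fam[symmetric])

lemma fam_cont: "continuous_on U (fam c u v B1 B2)"
  by (rule continuous_at_imp_continuous_on, rule ballI, rule has_derivative_continuous[OF fam_deriv])

lemma Ck_fam: "Ck_on k U (fam c u v B1 B2)"
proof (induction k arbitrary: c u v B1 B2)
  case 0 then show ?case using fam_cont by simp
next
  case (Suc k)
  have "fam c u v B1 B2 differentiable (at x)" for x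
    unfolding differentiable_def by (rule exI, rule fam_deriv)
  then show ?case using fam_cont by (simp add: partial_fam' Suc.IH)
qed

lemma smooth_fam: "smooth_on U (fam c u v B1 B2)"
  unfolding smooth_on_def using Ck_fam by blast



definition Sch :: "(pt \<Rightarrow> real^3) \<Rightarrow> pt \<Rightarrow> nat \<Rightarrow> nat \<Rightarrow> nat \<Rightarrow> real" where
  "Sch mu x a i j = (\<Sum>l\<in>{..<6}. PiMat mu x a l * Dm mu l i j + PiMat mu x i l * Dm mu l j a + PiMat mu x j l * Dm mu l a i)"

lemma sym2:
  assumes U: "open U" "x \<in> U" and f: "smooth_on U f"
  shows "\<forall>a\<in>{..<6}. \<forall>b\<in>{..<6}. partial b (partial a f) x = partial a (partial b f) x"
proof (intro ballI)
  fix a b :: nat assume "a \<in> {..<6}" "b \<in> {..<6}"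
  then have ab: "a < 6" "b < 6" by auto
  show "partial b (partial a f) x = partial a (partial b f) x"
  proof (rule schwarz[OF U])
    show "\<forall>y\<in>U. f differentiable (at y)" using smooth_diff[OF f] by blast
    show "\<forall>y\<in>U. partial a f differentiable (at y)" using smooth_diff[OF smooth_partial[OF f ab(1)]] by blast
    show "\<forall>y\<in>U. partial b f differentiable (at y)" using smooth_diff[OF smooth_partial[OF f ab(2)]] by blast
    show "continuous_on U (partial b (partial a f))"
      by (rule smooth_cont[OF smooth_partial[OF smooth_partial[OF f ab(1)] ab(2)]])
    show "continuous_on U (partial a (partial b f))"
      by (rule smooth_cont[OF smooth_partial[OF smooth_partial[OF f ab(2)] ab(1)]])
  qed
qed

lemma pb_Bk:
  assumes mu: "mu = (\<lambda>(M::real^3, g::real^3). A *v g + mu0)" and x: "x \<in> U"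
    and g: "smooth_on U g" and h: "smooth_on U h"
  shows "partial l (pbracket mu g h) x = Bk {..<6} (PiMat mu x) (Dm mu) (\<lambda>i. partial i g x)
     (\<lambda>i l. partial l (partial i g) x) (\<lambda>j. partial j h x) (\<lambda>j l. partial l (partial j h) x) l"
  unfolding Bk_def
proof (rule partial_pbracket[OF mu])
  show "\<forall>i<6. partial i g differentiable (at x)" using smooth_diff[OF smooth_partial[OF g] x] by blast
  show "\<forall>i<6. partial i h differentiable (at x)" using smooth_diff[OF smooth_partial[OF h] x] by blast
qed

lemma jacobi_formula:
  assumes mu: "mu = (\<lambda>(M::real^3, g::real^3). A *v g + mu0)" and U: "open U" "x \<in> U"
    and f: "smooth_on U f" and g: "smooth_on U g" and h: "smooth_on U h"
  shows "pbracket mu f (pbracket mu g h) x + pbracket mu g (pbracket mu h f) x + pbracket mu h (pbracket mu f g) x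
     = (\<Sum>a\<in>{..<6}. \<Sum>i\<in>{..<6}. \<Sum>j\<in>{..<6}. partial a f x * partial i g x * partial j h x * Sch mu x a i j)"
proof -
  have skew: "\<forall>a\<in>{..<6}. \<forall>b\<in>{..<6}. PiMat mu x a b = - PiMat mu x b a"
    by (intro ballI, rule PiMat_skew) auto
  have o: "pbracket mu p K x = (\<Sum>a\<in>{..<6}. \<Sum>l\<in>{..<6}. partial a p x * PiMat mu x a l * partial l K x)" for p K
    unfolding pbracket_def by simp
  show ?thesis
    unfolding o pb_Bk[OF mu U(2) g h] pb_Bk[OF mu U(2) h f] pb_Bk[OF mu U(2) f g] Sch_def
    by (rule jac_alg[OF skew sym2[OF U f] sym2[OF U g] sym2[OF U h]])
qed



lemma six: "{..<6::nat} = {0,1,2,3,4,5}" by auto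

lemma Sch_zero:
  assumes mu: "mu = (\<lambda>(M::real^3, g::real^3). A *v g + mu0)"
    and s12: "A$1$2 = A$2$1" and s13: "A$1$3 = A$3$1" and s23: "A$2$3 = A$3$2"
    and "a < 6" "i < 6" "j < 6"
  shows "Sch mu x a i j = 0"
proof -
  obtain M g where x: "x = (M, g)" by (cases x)
  show ?thesis using assms(5-7) unfolding less6
    apply (elim disjE)
    apply (simp_all add: Sch_def Dm_def PiMat_def unitv_def mu x Let_def matrix_vector_mult_def sum_3 axis_def zero_prod_def six s12 s13 s23 algebra_simps)
    done
qed



lemma Sch012:
  assumes mu: "mu = (\<lambda>(M::real^3, g::real^3). A *v g + mu0)"
  shows "Sch mu (M, g) 0 1 2 = 0 \<longleftrightarrow> g $ 1 * A $ 2 $ 3 + (g $ 2 * A $ 3 $ 1 + g $ 3 * A $ 1 $ 2) =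
     g $ 1 * A $ 3 $ 2 + (g $ 2 * A $ 1 $ 3 + g $ 3 * A $ 2 $ 1)"
  apply (simp add: Sch_def Dm_def PiMat_def unitv_def mu Let_def matrix_vector_mult_def sum_3 axis_def zero_prod_def six algebra_simps)
  done

definition cf :: "nat \<Rightarrow> pt \<Rightarrow> real" where
  "cf a = fam 0 (fst (unitv a)) (snd (unitv a)) 0 0"

lemma partial_cf: "i < 6 \<Longrightarrow> a < 6 \<Longrightarrow> partial i (cf a) x = (if i = a then 1 else 0)"
  unfolding cf_def partial_fam famD_def less6
  by (elim disjE) (simp_all add: unitv_def inner_axis_axis)

lemma casimir_rows:
  assumes mu: "mu = (\<lambda>(M::real^3, g::real^3). A *v g + mu0)"
    and s12: "A$1$2 = A$2$1" and s13: "A$1$3 = A$3$1" and s23: "A$2$3 = A$3$2"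
    and "i < 6"
  shows "(\<Sum>j<6. PiMat mu x i j * partial j (fam 0 0 mu0 (mat 1) ((1/2) *\<^sub>R A)) x) = 0"
proof -
  obtain M g where x: "x = (M, g)" by (cases x)
  show ?thesis using assms(5) unfolding less6 partial_fam
    apply (elim disjE)
    apply (simp_all add: famD_def PiMat_def unitv_def mu x Let_def matrix_vector_mult_def sum_3 axis_def six s12 s13 s23 algebra_simps inner_vec_def mat_def)
    done
qed

lemma collapse:
  "(\<Sum>a\<in>{..<6}. \<Sum>i\<in>{..<6}. \<Sum>j\<in>{..<6}. partial a (cf 0) x * partial i (cf 1) x * partial j (cf 2) x * S a i j) = S 0 1 2"
proof -
  have "(\<Sum>a\<in>{..<6}. \<Sum>i\<in>{..<6}. \<Sum>j\<in>{..<6}. partial a (cf 0) x * partial i (cf 1) x * partial j (cf 2) x * S a i j)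
    = (\<Sum>a\<in>{..<6}. \<Sum>i\<in>{..<6}. \<Sum>j\<in>{..<6}. (if a = 0 then 1 else 0) * (if i = 1 then 1 else 0) * (if j = 2 then 1 else 0) * S a i j)"
    by (intro sum.cong refl) (simp add: partial_cf)
  also have "\<dots> = S 0 1 2" by (simp add: six)
  finally show ?thesis .
qed

lemma symiff: "transpose A = (A::real^3^3) \<longleftrightarrow> (A$1$2 = A$2$1 \<and> A$1$3 = A$3$1 \<and> A$2$3 = A$3$2)"
proof
  assume T: "transpose A = A"
  have "\<And>i j. A$i$j = A$j$i"
  proof -
    fix i j
    have "(transpose A)$j$i = A$j$i" using T by simp
    then show "A$i$j = A$j$i" by (simp add: transpose_def)
  qed
  then show "A$1$2 = A$2$1 \<and> A$1$3 = A$3$1 \<and> A$2$3 = A$3$2" by simp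
next
  assume "A$1$2 = A$2$1 \<and> A$1$3 = A$3$1 \<and> A$2$3 = A$3$2"
  then show "transpose A = A"
    by (simp add: vec_eq_iff forall_3 transpose_def)
qed

lemma open_domU: "open domU"
  unfolding domU_def by (rule open_Collect_neq) (auto intro: continuous_intros)



theorem mainTheorem7:
  fixes A :: "real^3^3" and mu0 :: "real^3"
  defines "mu \<equiv> (\<lambda>(M::real^3, g::real^3). A *v g + mu0)"
  shows "(defines_poisson_on domU mu \<longleftrightarrow> transpose A = A)
    \<and> (transpose A = A \<longrightarrow>
         casimir_on domU mu (\<lambda>(M, g). (1/2) * (g \<bullet> (A *v g)) + (M + mu0) \<bullet> g))"
proof -
  have mu: "mu = (\<lambda>(M::real^3, g::real^3). A *v g + mu0)" by (simp add: mu_def)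
  have fwd: "defines_poisson_on domU mu" if T: "transpose A = A"
  proof -
    have s: "A$1$2 = A$2$1" "A$1$3 = A$3$1" "A$2$3 = A$3$2" using T symiff by auto
    show ?thesis unfolding defines_poisson_on_def
    proof (intro allI impI ballI)
      fix f g h x assume fgh: "smooth_on domU f \<and> smooth_on domU g \<and> smooth_on domU h" and x: "x \<in> domU"
      have "pbracket mu f (pbracket mu g h) x + pbracket mu g (pbracket mu h f) x + pbracket mu h (pbracket mu f g) x
        = (\<Sum>a\<in>{..<6}. \<Sum>i\<in>{..<6}. \<Sum>j\<in>{..<6}. partial a f x * partial i g x * partial j h x * Sch mu x a i j)"
        using jacobi_formula[OF mu open_domU x] fgh by blast
      also have "\<dots> = 0"
        by (intro sum.neutral ballI) (simp add: Sch_zero[OF mu s])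
      finally show "pbracket mu f (pbracket mu g h) x + pbracket mu g (pbracket mu h f) x + pbracket mu h (pbracket mu f g) x = 0" .
    qed
  qed
  have bwd: "transpose A = A" if P: "defines_poisson_on domU mu"
  proof -
    have key: "Sch mu (0, axis k 1) 0 1 2 = 0" for k :: 3
    proof -
      let ?x = "(0::real^3, axis k (1::real))"
      have x: "?x \<in> domU" by (simp add: domU_def axis_eq_0_iff)
      have sm: "smooth_on domU (cf a)" for a unfolding cf_def by (rule smooth_fam)
      have "pbracket mu (cf 0) (pbracket mu (cf 1) (cf 2)) ?x + pbracket mu (cf 1) (pbracket mu (cf 2) (cf 0)) ?x
         + pbracket mu (cf 2) (pbracket mu (cf 0) (cf 1)) ?x = 0"
        using P x sm unfolding defines_poisson_on_def by blast
      moreover have "pbracket mu (cf 0) (pbracket mu (cf 1) (cf 2)) ?x + pbracket mu (cf 1) (pbracket mu (cf 2) (cf 0)) ?x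
         + pbracket mu (cf 2) (pbracket mu (cf 0) (cf 1)) ?x = Sch mu ?x 0 1 2"
        unfolding jacobi_formula[OF mu open_domU x sm sm sm] by (rule collapse)
      ultimately show ?thesis by simp
    qed
    have e1: "A $ 2 $ 3 = A $ 3 $ 2" using key[of 1] unfolding Sch012[OF mu] by (simp add: axis_def)
    have e2: "A $ 3 $ 1 = A $ 1 $ 3" using key[of 2] unfolding Sch012[OF mu] by (simp add: axis_def)
    have e3: "A $ 1 $ 2 = A $ 2 $ 1" using key[of 3] unfolding Sch012[OF mu] by (simp add: axis_def)
    show ?thesis unfolding symiff using e1 e2 e3 by simp
  qed
  have cas: "casimir_on domU mu (\<lambda>(M, g). (1/2) * (g \<bullet> (A *v g)) + (M + mu0) \<bullet> g)" if T: "transpose A = A"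
  proof -
    have s: "A$1$2 = A$2$1" "A$1$3 = A$3$1" "A$2$3 = A$3$2" using T symiff by auto
    have C: "(\<lambda>(M, g). (1/2) * (g \<bullet> (A *v g)) + (M + mu0) \<bullet> g) = fam 0 0 mu0 (mat 1) ((1/2) *\<^sub>R A)"
      by (rule ext) (auto simp: fam_def scaleR_matrix_vector_assoc[symmetric] inner_add_left inner_add_right inner_commute)
    show ?thesis unfolding casimir_on_def C
      using smooth_fam casimir_rows[OF mu s] by blast
  qed
  show ?thesis using fwd bwd cas by blast
qed

end
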